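(* For every $n$ there exists a multigraph on $n$ nodes and $O(n^2)$ edges for which every friendly minimum $s,t$-cut sparsifier has $\Omega(n^2)$ edges.
   Context: For a multigraph $G=(V,E)$, $\deg(v)$ is the number of edges incident to $v$ (with multiplicity). A cut $S\subseteq V$ is unfriendly if there is a node $s\in S$ with $|E(\{s\},V\setminus S)|>0.6\deg(s)$ or a node $t\notin S$ with $|E(\{t\},S)|>0.6\deg(t)$ (edges counted with multiplicity); otherwise it is friendly. A sparsifier of $G$ is a graph $H$ obtained by deleting edges and contracting subsets of nodes (self-loops removed, parallel edges kept and counted separately). $H$ preserves a cut if none of its edges is deleted and no two nodes from different sides are contracted together. $H$ is a friendly minimum $s,t$-cut sparsifier of $G$ if for every pair $s,t$ for which all minimum $s,t$-cuts in $G$ are friendly, at least one minimum $s,t$-cut is preserved in $H$. *)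

theory Defs
  imports Complex_Main "HOL-Library.Multiset"
begin

text \<open>A multigraph on vertex set V: a finite multiset of edges, each edge an
unordered pair of distinct vertices (no self-loops; parallel edges are copies).\<close>
definition multigraph :: "'a set \<Rightarrow> 'a set multiset \<Rightarrow> bool" where
  "multigraph V E \<longleftrightarrow> finite V \<and> (\<forall>e\<in>#E. e \<subseteq> V \<and> card e = 2)"

definition deg :: "'a set multiset \<Rightarrow> 'a \<Rightarrow> nat" where
  "deg E v = size (filter_mset (\<lambda>e. v \<in> e) E)"

text \<open>E(A,B): edges (with multiplicity) with an endpoint in A and an endpoint in B
(used for disjoint A, B).\<close>
definition cross_edges :: "'a set multiset \<Rightarrow> 'a set \<Rightarrow> 'a set \<Rightarrow> 'a set multiset" where
  "cross_edges E A B = filter_mset (\<lambda>e. e \<inter> A \<noteq> {} \<and> e \<inter> B \<noteq> {}) E"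

definition cut_value :: "'a set \<Rightarrow> 'a set multiset \<Rightarrow> 'a set \<Rightarrow> nat" where
  "cut_value V E S = size (cross_edges E S (V - S))"

definition st_cut :: "'a set \<Rightarrow> 'a \<Rightarrow> 'a \<Rightarrow> 'a set \<Rightarrow> bool" where
  "st_cut V s t S \<longleftrightarrow> S \<subseteq> V \<and> s \<in> S \<and> t \<notin> S"

definition min_st_cut :: "'a set \<Rightarrow> 'a set multiset \<Rightarrow> 'a \<Rightarrow> 'a \<Rightarrow> 'a set \<Rightarrow> bool" where
  "min_st_cut V E s t S \<longleftrightarrow> st_cut V s t S \<and>
     (\<forall>S'. st_cut V s t S' \<longrightarrow> cut_value V E S \<le> cut_value V E S')"

definition unfriendly :: "'a set \<Rightarrow> 'a set multiset \<Rightarrow> 'a set \<Rightarrow> bool" where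
  "unfriendly V E S \<longleftrightarrow>
     (\<exists>s\<in>S. real (size (cross_edges E {s} (V - S))) > 0.6 * real (deg E s)) \<or>
     (\<exists>t\<in>V - S. real (size (cross_edges E {t} S)) > 0.6 * real (deg E t))"

definition friendly :: "'a set \<Rightarrow> 'a set multiset \<Rightarrow> 'a set \<Rightarrow> bool" where
  "friendly V E S \<longleftrightarrow> \<not> unfriendly V E S"

text \<open>A sparsifier H of G=(V,E) is given by the multiset F \<subseteq># E of non-deleted edges
and a contraction map phi (nodes u, v are contracted together iff phi u = phi v).
The edges of H are the edges of F whose endpoints are not contracted together
(self-loops removed, parallel edges kept).\<close>
definition sparsifier_edges :: "'a set multiset \<Rightarrow> ('a \<Rightarrow> 'b) \<Rightarrow> 'b set multiset" where
  "sparsifier_edges F phi = image_mset (\<lambda>e. phi ` e) (filter_mset (\<lambda>e. card (phi ` e) = 2) F)"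

definition preserves_cut :: "'a set \<Rightarrow> 'a set multiset \<Rightarrow> 'a set multiset \<Rightarrow> ('a \<Rightarrow> 'b) \<Rightarrow> 'a set \<Rightarrow> bool" where
  "preserves_cut V E F phi S \<longleftrightarrow>
     (\<forall>e\<in>#cross_edges E S (V - S). count F e = count E e) \<and>
     (\<forall>u\<in>V. \<forall>v\<in>V. phi u = phi v \<longrightarrow> (u \<in> S \<longleftrightarrow> v \<in> S))"

definition friendly_min_cut_sparsifier ::
  "'a set \<Rightarrow> 'a set multiset \<Rightarrow> 'a set multiset \<Rightarrow> ('a \<Rightarrow> 'b) \<Rightarrow> bool" where
  "friendly_min_cut_sparsifier V E F phi \<longleftrightarrow> F \<subseteq># E \<and>
     (\<forall>s\<in>V. \<forall>t\<in>V. s \<noteq> t \<and> (\<forall>S. min_st_cut V E s t S \<longrightarrow> friendly V E S) \<longrightarrow>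
        (\<exists>S. min_st_cut V E s t S \<and> preserves_cut V E F phi S))"

end

theory Submission
  imports Defs
begin

lemma filter_rep: "filter_mset Q (replicate_mset k x) = (if Q x then replicate_mset k x else {#})"
  by (induction k) auto

lemma size_filter_sum:
  "finite I \<Longrightarrow> size (filter_mset Q (\<Sum>i\<in>I. replicate_mset (w i) (g i))) = (\<Sum>i\<in>I. if Q (g i) then w i else 0)"
  by (induction I rule: finite_induct) (auto simp: filter_rep)

lemma mem_sum_rep:
  "finite I \<Longrightarrow> x \<in># (\<Sum>i\<in>I. replicate_mset (w i) (g i)) \<Longrightarrow> \<exists>i\<in>I. x = g i"
  by (induction I rule: finite_induct) (auto split: if_splits)

lemma size_sum_rep:
  "finite I \<Longrightarrow> size (\<Sum>i\<in>I. replicate_mset (w i) (g i)) = (\<Sum>i\<in>I. w i)"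
  by (induction I rule: finite_induct) auto

lemma sum_ind_card: "finite I \<Longrightarrow> (\<Sum>i\<in>I. if P i then (1::nat) else 0) = card {i\<in>I. P i}"
  by (simp add: sum.inter_filter[symmetric])

lemma sum_single_prod: "(\<Sum>i\<in>{x}\<times>A. f i) = (\<Sum>a\<in>A. f (x,a))"
proof -
  have "{x}\<times>A = Pair x ` A" by auto
  then show ?thesis by (simp add: sum.reindex inj_on_def)
qed

definition AA :: "nat \<Rightarrow> nat set" where "AA n = {2..<n div 2}"
definition BB :: "nat \<Rightarrow> nat set" where "BB n = {n div 2..<n}"
definition II :: "nat \<Rightarrow> (nat \<times> nat) set" where
  "II n = ({0::nat} \<times> AA n) \<union> ({1} \<times> BB n) \<union> (AA n \<times> BB n)"
definition wt :: "nat \<Rightarrow> nat \<times> nat \<Rightarrow> nat" where "wt n i = (if fst i \<le> 1 then n else 1)"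
definition ed :: "nat \<times> nat \<Rightarrow> nat set" where "ed i = {fst i, snd i}"
definition EE :: "nat \<Rightarrow> nat set multiset" where
  "EE n = (\<Sum>i\<in>II n. replicate_mset (wt n i) (ed i))"

lemma fin_II: "finite (II n)" by (simp add: II_def AA_def BB_def)

lemma sum_II: "(\<Sum>i\<in>II n. f i) = (\<Sum>a\<in>AA n. f (0,a)) + (\<Sum>b\<in>BB n. f (1,b)) + (\<Sum>i\<in>AA n \<times> BB n. f i)"
proof -
  have d1: "({0::nat} \<times> AA n) \<inter> ({1} \<times> BB n) = {}" by auto
  have d2: "(({0::nat} \<times> AA n) \<union> ({1} \<times> BB n)) \<inter> (AA n \<times> BB n) = {}" by (auto simp: AA_def)
  have f: "finite (AA n)" "finite (BB n)" by (auto simp: AA_def BB_def)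
  have "(\<Sum>i\<in>II n. f i) = (\<Sum>i\<in>({0::nat} \<times> AA n) \<union> ({1} \<times> BB n). f i) + (\<Sum>i\<in>AA n \<times> BB n. f i)"
    unfolding II_def using f d2 by (intro sum.union_disjoint) auto
  also have "(\<Sum>i\<in>({0::nat} \<times> AA n) \<union> ({1} \<times> BB n). f i) = (\<Sum>i\<in>{0::nat} \<times> AA n. f i) + (\<Sum>i\<in>{1::nat} \<times> BB n. f i)"
    using f d1 by (intro sum.union_disjoint) auto
  finally show ?thesis by (simp add: sum_single_prod)
qed

lemma size_filter_EE: "size (filter_mset Q (EE n)) =
   (\<Sum>a\<in>AA n. if Q {0,a} then n else 0) + (\<Sum>b\<in>BB n. if Q {1,b} then n else 0)
   + (\<Sum>i\<in>AA n \<times> BB n. if Q (ed i) then 1 else 0)"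
proof -
  have "size (filter_mset Q (EE n)) = (\<Sum>i\<in>II n. if Q (ed i) then wt n i else 0)"
    unfolding EE_def by (rule size_filter_sum[OF fin_II])
  also have "\<dots> = (\<Sum>a\<in>AA n. if Q {0,a} then n else 0) + (\<Sum>b\<in>BB n. if Q {1,b} then n else 0)
   + (\<Sum>i\<in>AA n \<times> BB n. if Q (ed i) then 1 else 0)" unfolding sum_II
    by (rule arg_cong2[where f="(+)"], rule arg_cong2[where f="(+)"])
       (auto simp: ed_def wt_def AA_def BB_def intro!: sum.cong)
  finally show ?thesis .
qed


lemma sum_if_const: "finite A \<Longrightarrow> (\<Sum>a\<in>A. if P a then (k::nat) else 0) = k * card {a\<in>A. P a}"
  by (simp add: sum.inter_filter[symmetric])

lemma cut_lower:
  assumes S: "S \<subseteq> {0..<n}" "0 \<in> S" "1 \<notin> S" and n2: "n \<ge> 2"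
  shows "n * card (AA n - S) + n * card (BB n \<inter> S) + card (AA n \<inter> S) * card (BB n - S)
     \<le> cut_value {0..<n} (EE n) S"
proof -
  let ?Q = "\<lambda>e. e \<inter> S \<noteq> {} \<and> e \<inter> ({0..<n} - S) \<noteq> {}"
  have fA: "finite (AA n)" and fB: "finite (BB n)" by (auto simp: AA_def BB_def)
  have cv: "cut_value {0..<n} (EE n) S = size (filter_mset ?Q (EE n))"
    by (simp add: cut_value_def cross_edges_def)
  have p1: "(\<Sum>a\<in>AA n. if ?Q {0,a} then n else 0) = (\<Sum>a\<in>AA n. if a \<notin> S then n else 0)"
    using S by (intro sum.cong) (auto simp: AA_def)
  have p1': "(\<Sum>a\<in>AA n. if a \<notin> S then n else 0) = n * card (AA n - S)"
    using fA by (simp add: sum_if_const set_diff_eq)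
  have p2: "(\<Sum>b\<in>BB n. if ?Q {1,b} then n else 0) = (\<Sum>b\<in>BB n. if b \<in> S then n else 0)"
    using S n2 by (intro sum.cong) (auto simp: BB_def)
  have p2': "(\<Sum>b\<in>BB n. if b \<in> S then n else 0) = n * card (BB n \<inter> S)"
    using fB by (simp add: sum_if_const Int_def)
  have p3: "(\<Sum>i\<in>AA n \<times> BB n. if fst i \<in> S \<and> snd i \<notin> S then 1 else 0)
      \<le> (\<Sum>i\<in>AA n \<times> BB n. if ?Q (ed i) then (1::nat) else 0)"
    using S by (intro sum_mono) (auto simp: ed_def BB_def AA_def)
  have p3': "(\<Sum>i\<in>AA n \<times> BB n. if fst i \<in> S \<and> snd i \<notin> S then 1 else 0)
     = card (AA n \<inter> S) * card (BB n - S)"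
  proof -
    have "{i \<in> AA n \<times> BB n. fst i \<in> S \<and> snd i \<notin> S} = (AA n \<inter> S) \<times> (BB n - S)" by auto
    then show ?thesis using fA fB by (simp add: sum_ind_card card_cartesian_product)
  qed
  show ?thesis unfolding cv size_filter_EE using p1 p1' p2 p2' p3 p3' by linarith
qed

lemma cut_S0:
  shows "cut_value {0..<n} (EE n) (insert 0 (AA n)) \<le> card (AA n) * card (BB n)"
proof -
  let ?S = "insert 0 (AA n)"
  let ?Q = "\<lambda>e. e \<inter> ?S \<noteq> {} \<and> e \<inter> ({0..<n} - ?S) \<noteq> {}"
  have fA: "finite (AA n)" and fB: "finite (BB n)" by (auto simp: AA_def BB_def)
  have cv: "cut_value {0..<n} (EE n) ?S = size (filter_mset ?Q (EE n))"
    by (simp add: cut_value_def cross_edges_def)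
  have p1: "(\<Sum>a\<in>AA n. if ?Q {0,a} then n else 0) = 0"
    by (intro sum.neutral) auto
  have p2: "(\<Sum>b\<in>BB n. if ?Q {1,b} then n else 0) = 0"
    by (intro sum.neutral) (auto simp: BB_def AA_def)
  have p3: "(\<Sum>i\<in>AA n \<times> BB n. if ?Q (ed i) then (1::nat) else 0) \<le> (\<Sum>i\<in>AA n \<times> BB n. 1)"
    by (intro sum_mono) auto
  show ?thesis unfolding cv size_filter_EE using p1 p2 p3 by (simp add: card_cartesian_product)
qed

lemma arith1:
  fixes x p y q n :: nat
  assumes "x + p < n" "y + q < n" "n*p + n*q + x*y \<le> (x+p)*(y+q)"
  shows "p = 0 \<and> q = 0"
proof (rule ccontr)
  assume h: "\<not> (p = 0 \<and> q = 0)"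
  have e: "(x+p)*(y+q) = x*y + x*q + p*(y+q)" by (simp add: algebra_simps)
  have a: "x*q \<le> n*q" using assms(1) by simp
  have b: "p*(y+q) \<le> n*p" using assms(2) by (simp add: mult.commute)
  have "x*q < n*q \<or> p*(y+q) < n*p"
  proof (cases "q = 0")
    case True then have "p > 0" using h by simp
    then show ?thesis using assms(2) by (simp add: mult.commute)
  next
    case False then show ?thesis using assms(1) by simp
  qed
  then show False using a b e assms(3) by linarith
qed

lemma min_cut_unique:
  assumes "min_st_cut {0..<n} (EE n) 0 1 S" and n2: "n \<ge> 2"
  shows "S = insert 0 (AA n)"
proof -
  have S: "S \<subseteq> {0..<n}" "0 \<in> S" "1 \<notin> S" using assms by (auto simp: min_st_cut_def st_cut_def)
  have "st_cut {0..<n} 0 1 (insert 0 (AA n))" unfolding st_cut_def using S by (auto simp: AA_def)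
  then have "cut_value {0..<n} (EE n) S \<le> cut_value {0..<n} (EE n) (insert 0 (AA n))"
    using assms by (auto simp: min_st_cut_def)
  then have le: "n * card (AA n - S) + n * card (BB n \<inter> S) + card (AA n \<inter> S) * card (BB n - S)
     \<le> card (AA n) * card (BB n)" using cut_lower[OF S n2] cut_S0[of n] by linarith
  have fA: "finite (AA n)" and fB: "finite (BB n)" by (auto simp: AA_def BB_def)
  have cA: "card (AA n) = card (AA n \<inter> S) + card (AA n - S)"
    using fA by (metis card_Int_Diff)
  have cB: "card (BB n) = card (BB n - S) + card (BB n \<inter> S)"
    using fB by (metis card_Int_Diff add.commute)
  have lA: "card (AA n) < n" using n2 by (simp add: AA_def)
  have lB: "card (BB n) < n" using n2 by (simp add: BB_def)
  have "card (AA n - S) = 0 \<and> card (BB n \<inter> S) = 0"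
    using arith1[of "card (AA n \<inter> S)" "card (AA n - S)" n "card (BB n - S)" "card (BB n \<inter> S)"]
      le lA lB cA cB by simp
  then have "AA n \<subseteq> S" "BB n \<inter> S = {}" using fA fB by auto
  then have AS: "AA n \<subseteq> S" and BS: "\<And>x. x \<in> S \<Longrightarrow> x \<notin> BB n" by auto
  show ?thesis
  proof (rule set_eqI, rule iffI)
    fix x assume x: "x \<in> S"
    then have "x < n" "x \<noteq> 1" using S by auto
    moreover have "\<not> (n div 2 \<le> x \<and> x < n)" using BS[OF x] by (simp add: BB_def)
    ultimately have "x = 0 \<or> (2 \<le> x \<and> x < n div 2)" by auto
    then show "x \<in> insert 0 (AA n)" by (auto simp: AA_def)
  next
    fix x assume "x \<in> insert 0 (AA n)"
    then show "x \<in> S" using AS S by auto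
  qed
qed


lemma deg_A: assumes "x \<in> AA n" shows "n \<le> deg (EE n) x"
proof -
  have "(\<lambda>a. if x \<in> {0,a} then n else 0) x \<le> (\<Sum>a\<in>AA n. if x \<in> {0,a} then n else 0)"
    by (rule member_le_sum) (use assms in \<open>auto simp: AA_def\<close>)
  then show ?thesis unfolding deg_def size_filter_EE by simp
qed

lemma deg_B: assumes "x \<in> BB n" shows "n \<le> deg (EE n) x"
proof -
  have "(\<lambda>b. if x \<in> {1,b} then n else 0) x \<le> (\<Sum>b\<in>BB n. if x \<in> {1,b} then n else 0)"
    by (rule member_le_sum) (use assms in \<open>auto simp: BB_def\<close>)
  then show ?thesis unfolding deg_def size_filter_EE by simp
qed

lemma cross_A: assumes x: "x \<in> AA n"
  shows "size (cross_edges (EE n) {x} ({0..<n} - insert 0 (AA n))) \<le> card (BB n)"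
proof -
  let ?T = "{0..<n} - insert 0 (AA n)"
  let ?Q = "\<lambda>e. e \<inter> {x} \<noteq> {} \<and> e \<inter> ?T \<noteq> {}"
  have fA: "finite (AA n)" and fB: "finite (BB n)" by (auto simp: AA_def BB_def)
  have p1: "(\<Sum>a\<in>AA n. if ?Q {0,a} then n else 0) = 0"
    by (intro sum.neutral) auto
  have p2: "(\<Sum>b\<in>BB n. if ?Q {1,b} then n else 0) = 0"
    using x by (intro sum.neutral) (auto simp: BB_def AA_def)
  have p3: "(\<Sum>i\<in>AA n \<times> BB n. if ?Q (ed i) then (1::nat) else 0)
      \<le> (\<Sum>i\<in>AA n \<times> BB n. if fst i = x then 1 else 0)"
    using x by (intro sum_mono) (auto simp: ed_def AA_def BB_def)
  have "{i \<in> AA n \<times> BB n. fst i = x} = {x} \<times> BB n" using x by auto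
  then have p3': "(\<Sum>i\<in>AA n \<times> BB n. if fst i = x then 1 else 0) = card (BB n)"
    using fA fB by (simp add: sum_ind_card card_cartesian_product)
  show ?thesis unfolding cross_edges_def size_filter_EE using p1 p2 p3 p3' by linarith
qed

lemma cross_B: assumes x: "x \<in> BB n" and n2: "n \<ge> 2"
  shows "size (cross_edges (EE n) {x} (insert 0 (AA n))) \<le> card (AA n)"
proof -
  let ?T = "insert 0 (AA n)"
  let ?Q = "\<lambda>e. e \<inter> {x} \<noteq> {} \<and> e \<inter> ?T \<noteq> {}"
  have fA: "finite (AA n)" and fB: "finite (BB n)" by (auto simp: AA_def BB_def)
  have p1: "(\<Sum>a\<in>AA n. if ?Q {0,a} then n else 0) = 0"
    using x by (intro sum.neutral) (auto simp: BB_def AA_def)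
  have p2: "(\<Sum>b\<in>BB n. if ?Q {1,b} then n else 0) = 0"
    using n2 by (intro sum.neutral) (auto simp: BB_def AA_def)
  have p3: "(\<Sum>i\<in>AA n \<times> BB n. if ?Q (ed i) then (1::nat) else 0)
      \<le> (\<Sum>i\<in>AA n \<times> BB n. if snd i = x then 1 else 0)"
    using x by (intro sum_mono) (auto simp: ed_def AA_def BB_def)
  have "{i \<in> AA n \<times> BB n. snd i = x} = AA n \<times> {x}" using x by auto
  then have p3': "(\<Sum>i\<in>AA n \<times> BB n. if snd i = x then 1 else 0) = card (AA n)"
    using fA fB by (simp add: sum_ind_card card_cartesian_product)
  show ?thesis unfolding cross_edges_def size_filter_EE using p1 p2 p3 p3' by linarith
qed

lemma cross_0: "size (cross_edges (EE n) {0} ({0..<n} - insert 0 (AA n))) = 0"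
  unfolding cross_edges_def size_filter_EE
  by (auto simp: AA_def BB_def ed_def intro!: sum.neutral)

lemma cross_1: "n \<ge> 2 \<Longrightarrow> size (cross_edges (EE n) {1} (insert 0 (AA n))) = 0"
  unfolding cross_edges_def size_filter_EE
  by (auto simp: AA_def BB_def ed_def intro!: sum.neutral)

lemma friendly_S0: assumes n: "n \<ge> 20" shows "friendly {0..<n} (EE n) (insert 0 (AA n))"
proof -
  have cA: "10 * card (BB n) \<le> 6 * n" using n by (simp add: BB_def) 
  have cB: "10 * card (AA n) \<le> 6 * n" using n by (simp add: AA_def)
  have s: "\<not> real (size (cross_edges (EE n) {s} ({0..<n} - insert 0 (AA n)))) > 0.6 * real (deg (EE n) s)"
    if "s \<in> insert 0 (AA n)" for s
  proof (cases "s = 0")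
    case True then show ?thesis using cross_0 by simp
  next
    case False
    then have sA: "s \<in> AA n" using that by auto
    have "real (size (cross_edges (EE n) {s} ({0..<n} - insert 0 (AA n)))) \<le> real (card (BB n))"
      using cross_A[OF sA] by simp
    moreover have "real n \<le> real (deg (EE n) s)" using deg_A[OF sA] by simp
    moreover have "10 * real (card (BB n)) \<le> 6 * real n" using cA by (metis of_nat_le_iff of_nat_mult of_nat_numeral)
    ultimately show ?thesis by linarith
  qed
  have t: "\<not> real (size (cross_edges (EE n) {t} (insert 0 (AA n)))) > 0.6 * real (deg (EE n) t)"
    if "t \<in> {0..<n} - insert 0 (AA n)" for t
  proof (cases "t = 1")
    case True then show ?thesis using cross_1 n by simp
  next
    case False
    then have tB: "t \<in> BB n" using that by (auto simp: AA_def BB_def)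
    have "real (size (cross_edges (EE n) {t} (insert 0 (AA n)))) \<le> real (card (AA n))"
      using cross_B[OF tB] n by simp
    moreover have "real n \<le> real (deg (EE n) t)" using deg_B[OF tB] by simp
    moreover have "10 * real (card (AA n)) \<le> 6 * real n" using cB by (metis of_nat_le_iff of_nat_mult of_nat_numeral)
    ultimately show ?thesis by linarith
  qed
  show ?thesis unfolding friendly_def unfriendly_def using s t by blast
qed

lemma multigraph_EE: assumes "n \<ge> 4" shows "multigraph {0..<n} (EE n)"
  unfolding multigraph_def
proof (intro conjI ballI)
  fix e assume "e \<in># EE n"
  then obtain i where i: "i \<in> II n" "e = ed i" using mem_sum_rep[OF fin_II, where w="wt n" and g=ed] unfolding EE_def by metis
  then have "fst i < snd i" "snd i < n" using \<open>n \<ge> 4\<close> by (auto simp: II_def AA_def BB_def)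
  then show "e \<subseteq> {0..<n}" "card e = 2" using i by (auto simp: ed_def)
qed simp

lemma size_EE: "size (EE n) \<le> 2 * n * n"
proof -
  have "size (EE n) = (\<Sum>i\<in>II n. wt n i)" unfolding EE_def by (rule size_sum_rep[OF fin_II])
  also have "\<dots> = n * card (AA n) + n * card (BB n) + card (AA n) * card (BB n)"
  proof -
    have "(\<Sum>i\<in>AA n \<times> BB n. wt n i) = (\<Sum>i\<in>AA n \<times> BB n. 1)"
      by (intro sum.cong) (auto simp: wt_def AA_def)
    then show ?thesis unfolding sum_II by (simp add: wt_def AA_def BB_def card_cartesian_product)
  qed
  also have "\<dots> \<le> 2 * n * n"
  proof -
    have a: "card (AA n) + card (BB n) \<le> n" "card (AA n) \<le> n" "card (BB n) \<le> n" by (auto simp: AA_def BB_def)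
    have "n * card (AA n) + n * card (BB n) \<le> n * n" using a(1)
      by (metis add_mult_distrib2 mult_le_mono2)
    moreover have "card (AA n) * card (BB n) \<le> n * n" using a by (simp add: mult_le_mono)
    ultimately show ?thesis by simp
  qed
  finally show ?thesis .
qed

lemma l4a: "(2*(k+10)+1)*(2*(k+10)+1) \<le> 8 * ((k+8) * (k+(10::nat)))"
  by (simp add: algebra_simps)
lemma l4: "10 \<le> (h::nat) \<Longrightarrow> (2*h+1)*(2*h+1) \<le> 8 * ((h-2) * h)"
proof -
  assume h: "10 \<le> h"
  define k where "k = h - 10"
  have hk: "h = k + 10" using h unfolding k_def by simp
  have h2: "h - 2 = k + 8" using hk by simp
  show ?thesis unfolding h2 unfolding hk by (rule l4a)
qed

lemma l5: "(n::nat) \<le> 2*(n div 2)+1" by auto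
lemma l6: "(n::nat) - n div 2 \<ge> n div 2" by auto

lemma lower_AB: assumes "n \<ge> 20" shows "n * n \<le> 8 * (card (AA n) * card (BB n))"
proof -
  have h: "n div 2 \<ge> 10" using assms by auto
  have cA: "card (AA n) = n div 2 - 2" and cB: "card (BB n) = n - n div 2" unfolding AA_def BB_def by auto
  have b: "n * n \<le> (2*(n div 2)+1)*(2*(n div 2)+1)" by (rule mult_le_mono[OF l5 l5])
  have c: "(n div 2-2) * (n div 2) \<le> (n div 2-2) * (n-n div 2)" by (rule mult_le_mono2[OF l6])
  have "n * n \<le> 8 * ((n div 2-2) * (n div 2))" using b l4[OF h] by (rule order_trans)
  also have "\<dots> \<le> 8 * ((n div 2-2) * (n-n div 2))" using c by (rule mult_le_mono2)
  finally show ?thesis unfolding cA cB .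
qed
lemma sparsifier_bound:
  assumes mg: "multigraph V E" and FE: "F \<subseteq># E" and pres: "preserves_cut V E F phi S"
  shows "cut_value V E S \<le> size (sparsifier_edges F phi)"
proof -
  let ?X = "cross_edges E S (V - S)"
  have "?X \<subseteq># filter_mset (\<lambda>e. card (phi ` e) = 2) F"
  proof (rule mset_subset_eqI)
    fix e
    show "count ?X e \<le> count (filter_mset (\<lambda>e. card (phi ` e) = 2) F) e"
    proof (cases "e \<in># ?X")
      case False then show ?thesis by (simp add: not_in_iff)
    next
      case True
      then have eE: "e \<in># E" and c1: "e \<inter> S \<noteq> {}" and c2: "e \<inter> (V - S) \<noteq> {}"
        by (auto simp: cross_edges_def)
      have cF: "count F e = count E e" using pres True by (auto simp: preserves_cut_def)
      from c1 obtain u where u: "u \<in> e" "u \<in> S" by auto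
      from c2 obtain v where v: "v \<in> e" "v \<in> V" "v \<notin> S" by auto
      have eV: "e \<subseteq> V" "card e = 2" using mg eE by (auto simp: multigraph_def)
      have uv: "u \<noteq> v" using u v by auto
      obtain x y where xy: "e = {x,y}" "x \<noteq> y" using eV(2) unfolding card_2_iff by blast
      have "e = {u, v}" using xy u(1) v(1) uv by auto
      have sep: "\<forall>u\<in>V. \<forall>v\<in>V. phi u = phi v \<longrightarrow> (u \<in> S \<longleftrightarrow> v \<in> S)"
        using pres unfolding preserves_cut_def by (rule conjunct2)
      have uV: "u \<in> V" using u(1) eV(1) by blast
      have "phi u \<noteq> phi v"
      proof
        assume "phi u = phi v"
        then have "u \<in> S \<longleftrightarrow> v \<in> S" using sep uV v(2) by blast
        then show False using u(2) v(3) by blast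
      qed
      then have "card (phi ` e) = 2" using \<open>e = {u,v}\<close> by simp
      then show ?thesis using cF True by (simp add: cross_edges_def)
    qed
  qed
  then have "size ?X \<le> size (filter_mset (\<lambda>e. card (phi ` e) = 2) F)"
    by (rule size_mset_mono)
  then show ?thesis by (simp add: cut_value_def sparsifier_edges_def)
qed


lemma main_n:
  fixes n :: nat assumes n: "20 \<le> n"
  shows "\<exists>E :: nat set multiset. multigraph {0..<n} E \<and> real (size E) \<le> 2 * real n ^ 2 \<and>
       (\<forall>F (phi :: nat \<Rightarrow> nat). friendly_min_cut_sparsifier {0..<n} E F phi \<longrightarrow>
          real (size (sparsifier_edges F phi)) \<ge> 1/8 * real n ^ 2)"
proof (rule exI[of _ "EE n"], intro conjI allI impI)
  show mg: "multigraph {0..<n} (EE n)" using n by (intro multigraph_EE) simp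
  have "real (size (EE n)) \<le> real (2 * n * n)" using size_EE[of n] by (simp only: of_nat_le_iff)
  then show "real (size (EE n)) \<le> 2 * real n ^ 2" by (simp add: power2_eq_square)
  fix F and phi :: "nat \<Rightarrow> nat"
  assume fs: "friendly_min_cut_sparsifier {0..<n} (EE n) F phi"
  have FE: "F \<subseteq># EE n" using fs by (simp add: friendly_min_cut_sparsifier_def)
  have allf: "\<forall>S. min_st_cut {0..<n} (EE n) 0 1 S \<longrightarrow> friendly {0..<n} (EE n) S"
  proof (intro allI impI)
    fix S assume "min_st_cut {0..<n} (EE n) 0 1 S"
    then have "S = insert 0 (AA n)" using n by (intro min_cut_unique) auto
    then show "friendly {0..<n} (EE n) S" using friendly_S0 n by simp
  qed
  have z: "(0::nat) \<in> {0..<n}" and o: "(1::nat) \<in> {0..<n}" using n by auto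
  have fs2: "\<forall>s\<in>{0..<n}. \<forall>t\<in>{0..<n}. s \<noteq> t \<and> (\<forall>S. min_st_cut {0..<n} (EE n) s t S \<longrightarrow> friendly {0..<n} (EE n) S) \<longrightarrow>
        (\<exists>S. min_st_cut {0..<n} (EE n) s t S \<and> preserves_cut {0..<n} (EE n) F phi S)"
    using fs unfolding friendly_min_cut_sparsifier_def by (rule conjunct2)
  have "(0::nat) \<noteq> 1 \<and> (\<forall>S. min_st_cut {0..<n} (EE n) 0 1 S \<longrightarrow> friendly {0..<n} (EE n) S)"
    using allf by simp
  then have "\<exists>S. min_st_cut {0..<n} (EE n) 0 1 S \<and> preserves_cut {0..<n} (EE n) F phi S"
    using fs2[rule_format, OF z o] by simp
  then obtain S where S: "min_st_cut {0..<n} (EE n) 0 1 S" "preserves_cut {0..<n} (EE n) F phi S"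
    by (elim exE conjE)
  have S0: "S = insert 0 (AA n)" using S(1) n by (intro min_cut_unique) auto
  have Sc: "S \<subseteq> {0..<n}" "0 \<in> S" "1 \<notin> S" using S(1) by (auto simp: min_st_cut_def st_cut_def)
  have n2: "2 \<le> n" using n by simp
  have i1: "AA n \<inter> S = AA n" and i2: "BB n - S = BB n" unfolding S0 using n2 by (auto simp: AA_def BB_def)
  have "card (AA n) * card (BB n) \<le> cut_value {0..<n} (EE n) S"
    using cut_lower[OF Sc n2] unfolding i1 i2 by (rule le_trans[OF le_add2])
  also have "\<dots> \<le> size (sparsifier_edges F phi)" using sparsifier_bound[OF mg FE S(2)] .
  finally have "8 * (card (AA n) * card (BB n)) \<le> 8 * size (sparsifier_edges F phi)" by simp
  then have "n * n \<le> 8 * size (sparsifier_edges F phi)" using lower_AB[OF n] by (rule le_trans[rotated])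
  then have "real (n * n) \<le> real (8 * size (sparsifier_edges F phi))" by (simp only: of_nat_le_iff)
  then show "1/8 * real n ^ 2 \<le> real (size (sparsifier_edges F phi))" by (simp add: power2_eq_square)
qed

theorem mainTheorem8:
  shows "\<exists>C c :: real. C > 0 \<and> c > 0 \<and> (\<exists>N::nat. \<forall>n\<ge>N.
     \<exists>E :: nat set multiset. multigraph {0..<n} E \<and> real (size E) \<le> C * real n ^ 2 \<and>
       (\<forall>F (phi :: nat \<Rightarrow> nat). friendly_min_cut_sparsifier {0..<n} E F phi \<longrightarrow>
          real (size (sparsifier_edges F phi)) \<ge> c * real n ^ 2))"
  apply (rule exI[of _ 2])
  apply (rule exI[of _ "1/8"])
  apply (intro conjI)
    apply simp
   apply simp
  apply (rule exI[of _ 20])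
  apply (intro allI impI)
  apply (erule main_n)
  done

end
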